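(* Let $\mathbb{K}$ be a field of characteristic different from $2$, let $d\ge 1$, and let $V,W$ be finite-dimensional $\mathbb{K}$-vector spaces with $\dim_{\mathbb K}V=N$ and $\dim_{\mathbb K}W=M$. Let $A(\xi):V\to W$, $\xi\in\mathbb{K}^d$, be a homogeneous symbol of degree $k$, i.e. in fixed bases $A(\xi)$ is an $M\times N$ matrix whose entries are homogeneous polynomials of degree $k$ in $\mathbb{K}[\xi_1,\dots,\xi_d]$; denote its columns by $a_1(\xi),\dots,a_N(\xi)\in W$. Assume that there is an integer $r\ge 0$ with $\operatorname{rank}_{\mathbb K}A(\xi)=r$ for all $\xi\in\mathbb{K}^d\setminus\{0\}$. Let $X:=\left(\bigwedge^{r+1}W\right)^{\binom{N}{r}}$ (with the convention $\binom{M}{M+1}=0$, so $X=\{0\}$ if $r=M$), and define $Q(\xi):W\to X$ by $$Q(\xi)(w):=\big(a_{i_1}(\xi)\wedge\cdots\wedge a_{i_r}(\xi)\wedge w\big)_{1\le i_1<\cdots<i_r\le N}.$$ Then $Q(\xi)$ is a homogeneous symbol on $\mathbb{K}^d$ such that: (1) if $r<\dim W$, the order (degree in $\xi$) of $Q(\xi)$ is $rk$; (2) if $r=M$, then $X=\{0\}$ and $Q(\xi)$ is the zero operator; (3) in either case, $\operatorname{im}A(\xi)=\ker Q(\xi)$ for all nonzero $\xi\in\mathbb{K}^d$.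
   Context: For a vector space $W$ and $r\le \dim W$, $\bigwedge^{r}W$ denotes the $r$-fold exterior power, spanned inside $W^{\otimes r}$ by $m_1\wedge\cdots\wedge m_r:=\sum_{\sigma\in S_r}\operatorname{sign}(\sigma)\,m_{\sigma(1)}\otimes\cdots\otimes m_{\sigma(r)}$. *)

theory Defs
  imports "Jordan_Normal_Form.DL_Rank" "HOL-Combinatorics.Permutations"
begin

(* A (formal) polynomial in d variables xi_0..xi_{d-1} over 'a is given by its
   coefficient function on exponent vectors alpha :: nat => nat.
   It is homogeneous of degree k if every monomial with nonzero coefficient
   only uses the variables 0..d-1 and has total degree k (this also forces
   finite support). *)
definition hom_poly :: "nat \<Rightarrow> nat \<Rightarrow> ((nat \<Rightarrow> nat) \<Rightarrow> 'a::field) \<Rightarrow> bool" where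
  "hom_poly d k c \<longleftrightarrow>
     (\<forall>\<alpha>. c \<alpha> \<noteq> 0 \<longrightarrow> (\<forall>i\<ge>d. \<alpha> i = 0) \<and> sum \<alpha> {..<d} = k)"

definition poly_eval :: "nat \<Rightarrow> ((nat \<Rightarrow> nat) \<Rightarrow> 'a::field) \<Rightarrow> 'a vec \<Rightarrow> 'a" where
  "poly_eval d c \<xi> = (\<Sum>\<alpha> \<in> {\<alpha>. c \<alpha> \<noteq> 0}. c \<alpha> * (\<Prod>i<d. (\<xi> $ i) ^ \<alpha> i))"

definition hom_symbol :: "nat \<Rightarrow> nat \<Rightarrow> nat \<Rightarrow> nat \<Rightarrow> ('a::field vec \<Rightarrow> 'a mat) \<Rightarrow> bool" where
  "hom_symbol d k M N S \<longleftrightarrow>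
     (\<exists>P. (\<forall>i j. hom_poly d k (P i j)) \<and>
          (\<forall>\<xi>\<in>carrier_vec d. S \<xi> = mat M N (\<lambda>(i,j). poly_eval d (P i j) \<xi>)))"

(* Tensors of order m over W = K^M are functions of the index tuple
   idx :: nat => nat (only idx 0 .. idx (m-1) matter). *)
definition wedge :: "'a::field vec list \<Rightarrow> (nat \<Rightarrow> nat) \<Rightarrow> 'a" where
  "wedge vs = (\<lambda>idx. \<Sum>\<sigma> \<in> {\<sigma>. \<sigma> permutes {..<length vs}}.
       of_int (sign \<sigma>) * (\<Prod>j<length vs. (vs ! (\<sigma> j)) $ (idx j)))"

(* Components of X are indexed by r-element subsets I = {i_1 < ... < i_r} of {0..<N};
   each component is an (r+1)-tensor over K^M, represented on the valid index tuples
   (idx j < M for j <= r, idx j = 0 beyond) and extended by 0 elsewhere. *)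
definition Qop :: "nat \<Rightarrow> nat \<Rightarrow> nat \<Rightarrow> ('a::field vec \<Rightarrow> 'a mat) \<Rightarrow> 'a vec \<Rightarrow> 'a vec
                   \<Rightarrow> nat set \<Rightarrow> (nat \<Rightarrow> nat) \<Rightarrow> 'a" where
  "Qop M N r A \<xi> w = (\<lambda>I idx.
     if I \<subseteq> {..<N} \<and> card I = r \<and> (\<forall>j\<le>r. idx j < M) \<and> (\<forall>j>r. idx j = 0)
     then wedge (map (\<lambda>i. col (A \<xi>) i) (sorted_list_of_set I) @ [w]) idx
     else 0)"

definition hom_symbol_X :: "nat \<Rightarrow> nat \<Rightarrow> nat
      \<Rightarrow> ('a::field vec \<Rightarrow> 'a vec \<Rightarrow> nat set \<Rightarrow> (nat \<Rightarrow> nat) \<Rightarrow> 'a) \<Rightarrow> bool" where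
  "hom_symbol_X d k M Q \<longleftrightarrow>
     (\<exists>P. (\<forall>I idx j. hom_poly d k (P I idx j)) \<and>
          (\<forall>\<xi>\<in>carrier_vec d. \<forall>w\<in>carrier_vec M. \<forall>I idx.
              Q \<xi> w I idx = (\<Sum>j<M. poly_eval d (P I idx j) \<xi> * w $ j)))"

end

theory Submission
  imports Defs
begin


definition HP :: "nat \<Rightarrow> nat \<Rightarrow> ('a::field vec \<Rightarrow> 'a) \<Rightarrow> bool" where
  "HP d k f \<longleftrightarrow> (\<exists>c. hom_poly d k c \<and> (\<forall>\<xi>\<in>carrier_vec d. f \<xi> = poly_eval d c \<xi>))"

definition mono :: "nat \<Rightarrow> (nat \<Rightarrow> nat) \<Rightarrow> 'a::field vec \<Rightarrow> 'a" where
  "mono d \<alpha> \<xi> = (\<Prod>i<d. (\<xi> $ i) ^ \<alpha> i)"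

lemma hom_poly_finite:
  assumes h: "hom_poly d k c" shows "finite {\<alpha>. c \<alpha> \<noteq> 0}"
proof -
  have "{\<alpha>. c \<alpha> \<noteq> 0} \<subseteq> {f. \<forall>x. (x \<in> {..<d} \<longrightarrow> f x \<in> {..k}) \<and> (x \<notin> {..<d} \<longrightarrow> f x = 0)}"
  proof
    fix \<alpha> assume "\<alpha> \<in> {\<alpha>. c \<alpha> \<noteq> 0}"
    then have a: "\<forall>i\<ge>d. \<alpha> i = 0" "sum \<alpha> {..<d} = k" using h unfolding hom_poly_def by auto
    have "\<alpha> x \<le> k" if "x < d" for x
      using member_le_sum[of x "{..<d}" \<alpha>] that a(2) by auto
    then show "\<alpha> \<in> {f. \<forall>x. (x \<in> {..<d} \<longrightarrow> f x \<in> {..k}) \<and> (x \<notin> {..<d} \<longrightarrow> f x = 0)}"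
      using a(1) by auto
  qed
  moreover have "finite {f. \<forall>x. (x \<in> {..<d} \<longrightarrow> f x \<in> {..k}) \<and> (x \<notin> {..<d} \<longrightarrow> f x = (0::nat))}"
    by (rule finite_set_of_finite_funs) auto
  ultimately show ?thesis by (rule finite_subset)
qed

lemma poly_eval_superset:
  assumes "finite T" "{\<alpha>. c \<alpha> \<noteq> 0} \<subseteq> T"
  shows "poly_eval d c \<xi> = (\<Sum>\<alpha>\<in>T. c \<alpha> * mono d \<alpha> \<xi>)"
  unfolding poly_eval_def mono_def
  by (rule sum.mono_neutral_right[symmetric]) (use assms in auto)

lemma HP_cong: "HP d k f \<Longrightarrow> (\<And>\<xi>. \<xi> \<in> carrier_vec d \<Longrightarrow> f \<xi> = g \<xi>) \<Longrightarrow> HP d k g"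
  unfolding HP_def by metis

lemma HP_zero: "HP d k (\<lambda>\<xi>. 0)"
  unfolding HP_def hom_poly_def poly_eval_def
  by (rule exI[of _ "\<lambda>_. 0"]) auto

lemma HP_const: "HP d 0 (\<lambda>\<xi>. a)"
proof -
  define c where "c = (\<lambda>\<alpha>::nat\<Rightarrow>nat. if \<alpha> = (\<lambda>_. 0) then a else 0)"
  have "hom_poly d 0 c" unfolding hom_poly_def c_def by auto
  moreover have "a = poly_eval d c \<xi>" for \<xi>
    by (subst poly_eval_superset[of "{\<lambda>_. 0}"]) (auto simp: c_def mono_def)
  ultimately show ?thesis unfolding HP_def by blast
qed

lemma HP_add:
  assumes "HP d k f" "HP d k g" shows "HP d k (\<lambda>\<xi>. f \<xi> + g \<xi>)"
proof -
  obtain c1 c2 where c: "hom_poly d k c1" "\<forall>\<xi>\<in>carrier_vec d. f \<xi> = poly_eval d c1 \<xi>"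
     "hom_poly d k c2" "\<forall>\<xi>\<in>carrier_vec d. g \<xi> = poly_eval d c2 \<xi>"
    using assms unfolding HP_def by blast
  define c where "c = (\<lambda>\<alpha>. c1 \<alpha> + c2 \<alpha>)"
  have "hom_poly d k c" using c(1,3) unfolding hom_poly_def c_def
    by (metis add.left_neutral add_0_right)
  moreover {
    fix \<xi> :: "'a vec"
    let ?T = "{\<alpha>. c1 \<alpha> \<noteq> 0} \<union> {\<alpha>. c2 \<alpha> \<noteq> 0}"
    have fT: "finite ?T" using hom_poly_finite c(1,3) by blast
    have "poly_eval d c1 \<xi> + poly_eval d c2 \<xi> = poly_eval d c \<xi>"
      apply (subst (1 2 3) poly_eval_superset[OF fT])
      by (auto simp: c_def sum.distrib algebra_simps)
  }
  ultimately show ?thesis unfolding HP_def using c by metis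
qed

lemma HP_scale:
  assumes "HP d k f" shows "HP d k (\<lambda>\<xi>. a * f \<xi>)"
proof -
  obtain c1 where c: "hom_poly d k c1" "\<forall>\<xi>\<in>carrier_vec d. f \<xi> = poly_eval d c1 \<xi>"
    using assms unfolding HP_def by blast
  define c where "c = (\<lambda>\<alpha>. a * c1 \<alpha>)"
  have "hom_poly d k c" using c(1) unfolding hom_poly_def c_def by auto
  moreover {
    fix \<xi> :: "'a vec"
    have fT: "finite {\<alpha>. c1 \<alpha> \<noteq> 0}" using hom_poly_finite c(1) by blast
    have "a * poly_eval d c1 \<xi> = poly_eval d c \<xi>"
      apply (subst (1 2) poly_eval_superset[OF fT])
      by (auto simp: c_def sum_distrib_left algebra_simps)
  }
  ultimately show ?thesis unfolding HP_def using c by metis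
qed

lemma mono_add: "mono d (\<lambda>i. \<beta> i + \<gamma> i) \<xi> = mono d \<beta> \<xi> * mono d \<gamma> \<xi>"
  unfolding mono_def by (simp add: power_add prod.distrib)

lemma HP_mult:
  assumes "HP d a f" "HP d b g" shows "HP d (a + b) (\<lambda>\<xi>. f \<xi> * g \<xi>)"
proof -
  obtain c1 c2 where c: "hom_poly d a c1" "\<forall>\<xi>\<in>carrier_vec d. f \<xi> = poly_eval d c1 \<xi>"
     "hom_poly d b c2" "\<forall>\<xi>\<in>carrier_vec d. g \<xi> = poly_eval d c2 \<xi>"
    using assms unfolding HP_def by blast
  define S1 where "S1 = {\<alpha>. c1 \<alpha> \<noteq> 0}"
  define S2 where "S2 = {\<alpha>. c2 \<alpha> \<noteq> 0}"
  define P where "P = S1 \<times> S2"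
  define h where "h = (\<lambda>p::(nat\<Rightarrow>nat)\<times>(nat\<Rightarrow>nat). (\<lambda>i. fst p i + snd p i))"
  define c where "c = (\<lambda>\<alpha>. \<Sum>p\<in>{p\<in>P. h p = \<alpha>}. c1 (fst p) * c2 (snd p))"
  have fP: "finite P" unfolding P_def S1_def S2_def using hom_poly_finite c(1,3) by blast
  have supp: "{\<alpha>. c \<alpha> \<noteq> 0} \<subseteq> h ` P"
  proof
    fix \<alpha> assume "\<alpha> \<in> {\<alpha>. c \<alpha> \<noteq> 0}"
    then have "c \<alpha> \<noteq> 0" by simp
    have "{p\<in>P. h p = \<alpha>} \<noteq> {}"
    proof
      assume "{p\<in>P. h p = \<alpha>} = {}"
      then have "c \<alpha> = 0" unfolding c_def by (simp only: sum.empty)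
      with \<open>c \<alpha> \<noteq> 0\<close> show False by simp
    qed
    then show "\<alpha> \<in> h ` P" by blast
  qed
  have "hom_poly d (a + b) c" unfolding hom_poly_def
  proof (intro allI impI)
    fix \<alpha> assume "c \<alpha> \<noteq> 0"
    then obtain p where p: "p \<in> P" "\<alpha> = h p" using supp by blast
    have nz: "c1 (fst p) \<noteq> 0" "c2 (snd p) \<noteq> 0" using p(1) unfolding P_def S1_def S2_def
      by (auto simp: mem_Times_iff)
    have h1: "(\<forall>i\<ge>d. fst p i = 0) \<and> sum (fst p) {..<d} = a"
      using c(1) nz(1) unfolding hom_poly_def by blast
    have h2: "(\<forall>i\<ge>d. snd p i = 0) \<and> sum (snd p) {..<d} = b"
      using c(3) nz(2) unfolding hom_poly_def by blast
    show "(\<forall>i\<ge>d. \<alpha> i = 0) \<and> sum \<alpha> {..<d} = a + b"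
      using h1 h2 p(2) unfolding h_def by (simp add: sum.distrib)
  qed
  moreover {
    fix \<xi> :: "'a vec"
    have "poly_eval d c \<xi> = (\<Sum>\<alpha>\<in>h ` P. c \<alpha> * mono d \<alpha> \<xi>)"
      by (rule poly_eval_superset) (use fP supp in auto)
    also have "\<dots> = (\<Sum>\<alpha>\<in>h ` P. \<Sum>p\<in>{p\<in>P. h p = \<alpha>}. c1 (fst p) * c2 (snd p) * mono d (h p) \<xi>)"
      unfolding c_def sum_distrib_right by (intro sum.cong) auto
    also have "\<dots> = (\<Sum>p\<in>P. c1 (fst p) * c2 (snd p) * mono d (h p) \<xi>)"
      by (rule sum.image_gen[symmetric]) (rule fP)
    also have "\<dots> = (\<Sum>p\<in>P. (c1 (fst p) * mono d (fst p) \<xi>) * (c2 (snd p) * mono d (snd p) \<xi>))"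
      unfolding h_def mono_add by (simp add: algebra_simps)
    also have "\<dots> = (\<Sum>\<beta>\<in>S1. c1 \<beta> * mono d \<beta> \<xi>) * (\<Sum>\<gamma>\<in>S2. c2 \<gamma> * mono d \<gamma> \<xi>)"
      unfolding P_def sum_product sum.cartesian_product by (simp add: case_prod_beta)
    also have "\<dots> = poly_eval d c1 \<xi> * poly_eval d c2 \<xi>"
      unfolding poly_eval_def mono_def S1_def S2_def ..
    finally have "poly_eval d c1 \<xi> * poly_eval d c2 \<xi> = poly_eval d c \<xi>" ..
  }
  ultimately show ?thesis unfolding HP_def using c by metis
qed

lemma HP_sum:
  assumes "finite S" "\<And>x. x \<in> S \<Longrightarrow> HP d k (f x)"
  shows "HP d k (\<lambda>\<xi>. \<Sum>x\<in>S. f x \<xi>)"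
  using assms by (induction S rule: finite_induct) (auto intro: HP_zero HP_add)

lemma HP_prod:
  assumes "finite S" "\<And>x. x \<in> S \<Longrightarrow> HP d k (f x)"
  shows "HP d (card S * k) (\<lambda>\<xi>. \<Prod>x\<in>S. f x \<xi>)"
  using assms
proof (induction S rule: finite_induct)
  case empty
  then show ?case using HP_const[of d 1] by simp
next
  case (insert x F)
  then have "HP d (k + card F * k) (\<lambda>\<xi>. f x \<xi> * (\<Prod>x\<in>F. f x \<xi>))"
    by (intro HP_mult) auto
  then show ?case using insert by simp
qed



lemma wedge_expand:
  fixes us :: "'a::field vec list" and w :: "'a vec"
  assumes len: "length us = r" and idxM: "\<forall>j\<le>r. idx j < M"
  shows "wedge (us @ [w]) idx = (\<Sum>m<M. (\<Sum>\<sigma>\<in>{\<sigma>. \<sigma> permutes {..<Suc r}}.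
      if idx (inv_into UNIV \<sigma> r) = m then of_int (sign \<sigma>) * (\<Prod>j\<in>{..<Suc r}-{inv_into UNIV \<sigma> r}. us ! (\<sigma> j) $ idx j) else 0) * w $ m)"
proof -
  let ?P = "{\<sigma>. \<sigma> permutes {..<Suc r}}"
  have "wedge (us @ [w]) idx = (\<Sum>\<sigma>\<in>?P. of_int (sign \<sigma>) * (\<Prod>j<Suc r. (us @ [w]) ! (\<sigma> j) $ idx j))"
    unfolding wedge_def using len by simp
  also have "\<dots> = (\<Sum>\<sigma>\<in>?P. \<Sum>m<M. (if idx (inv_into UNIV \<sigma> r) = m then of_int (sign \<sigma>) * (\<Prod>j\<in>{..<Suc r}-{inv_into UNIV \<sigma> r}. us ! (\<sigma> j) $ idx j) else 0) * w $ m)"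
  proof (rule sum.cong[OF refl])
    fix \<sigma> assume "\<sigma> \<in> ?P"
    then have perm: "\<sigma> permutes {..<Suc r}" by simp
    define j0 where "j0 = inv_into UNIV \<sigma> r"
    have j0: "j0 \<in> {..<Suc r}" "\<sigma> j0 = r"
      unfolding j0_def using permutes_in_image[OF permutes_inv[OF perm], of r] permutes_inverses(1)[OF perm]
      by auto
    have "(\<Prod>j<Suc r. (us @ [w]) ! (\<sigma> j) $ idx j) = (us @ [w]) ! (\<sigma> j0) $ idx j0 * (\<Prod>j\<in>{..<Suc r}-{j0}. (us @ [w]) ! (\<sigma> j) $ idx j)"
      by (rule prod.remove) (use j0 in auto)
    also have "(us @ [w]) ! (\<sigma> j0) $ idx j0 = w $ idx j0" using j0 len by (simp add: nth_append)
    also have "(\<Prod>j\<in>{..<Suc r}-{j0}. (us @ [w]) ! (\<sigma> j) $ idx j) = (\<Prod>j\<in>{..<Suc r}-{j0}. us ! (\<sigma> j) $ idx j)"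
    proof (rule prod.cong[OF refl])
      fix j assume j: "j \<in> {..<Suc r}-{j0}"
      have "\<sigma> j \<in> {..<Suc r}" using permutes_in_image[OF perm, of j] j by simp
      moreover have "\<sigma> j \<noteq> r" proof
        assume "\<sigma> j = r"
        then have "\<sigma> j = \<sigma> j0" using j0 by simp
        from injD[OF permutes_inj[OF perm] this] show False using j by simp
      qed
      ultimately have "\<sigma> j < length us" using len by auto
      then show "(us @ [w]) ! (\<sigma> j) $ idx j = us ! (\<sigma> j) $ idx j" by (simp add: nth_append)
    qed
    finally have eq: "(\<Prod>j<Suc r. (us @ [w]) ! (\<sigma> j) $ idx j) = w $ idx j0 * (\<Prod>j\<in>{..<Suc r}-{j0}. us ! (\<sigma> j) $ idx j)" .
    have "idx j0 < M" using idxM j0 by auto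
    then show "of_int (sign \<sigma>) * (\<Prod>j<Suc r. (us @ [w]) ! (\<sigma> j) $ idx j) = (\<Sum>m<M. (if idx (inv_into UNIV \<sigma> r) = m then of_int (sign \<sigma>) * (\<Prod>j\<in>{..<Suc r}-{inv_into UNIV \<sigma> r}. us ! (\<sigma> j) $ idx j) else 0) * w $ m)"
      unfolding eq j0_def[symmetric] by (simp add: if_distrib[where f="\<lambda>x. x * _"] sum.delta cong: if_cong)
  qed
  also have "\<dots> = (\<Sum>m<M. \<Sum>\<sigma>\<in>?P. (if idx (inv_into UNIV \<sigma> r) = m then of_int (sign \<sigma>) * (\<Prod>j\<in>{..<Suc r}-{inv_into UNIV \<sigma> r}. us ! (\<sigma> j) $ idx j) else 0) * w $ m)"
    by (rule sum.swap)
  also have "\<dots> = (\<Sum>m<M. (\<Sum>\<sigma>\<in>?P. if idx (inv_into UNIV \<sigma> r) = m then of_int (sign \<sigma>) * (\<Prod>j\<in>{..<Suc r}-{inv_into UNIV \<sigma> r}. us ! (\<sigma> j) $ idx j) else 0) * w $ m)"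
    by (simp add: sum_distrib_right)
  finally show ?thesis .
qed

lemma Qop_hom:
  assumes symb: "hom_symbol d k M N A"
  shows "hom_symbol_X d (r * k) M (Qop M N r A)"
proof -
  obtain P where P: "\<forall>i j. hom_poly d k (P i j)"
     "\<forall>\<xi>\<in>carrier_vec d. A \<xi> = mat M N (\<lambda>(i,j). poly_eval d (P i j) \<xi>)"
    using symb unfolding hom_symbol_def by blast
  define cond where "cond I idx \<longleftrightarrow> I \<subseteq> {..<N} \<and> card I = r \<and> (\<forall>j\<le>r. idx j < M) \<and> (\<forall>j>r. idx j = 0)" for I idx
  define F where "F I idx m \<xi> = (if cond I idx then (\<Sum>\<sigma>\<in>{\<sigma>. \<sigma> permutes {..<Suc r}}.
      if idx (inv_into UNIV \<sigma> r) = m then of_int (sign \<sigma>) * (\<Prod>j\<in>{..<Suc r}-{inv_into UNIV \<sigma> r}.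
        (map (\<lambda>i. col (A \<xi>) i) (sorted_list_of_set I)) ! (\<sigma> j) $ idx j) else 0) else 0)" for I idx m \<xi>
  have eq: "Qop M N r A \<xi> w I idx = (\<Sum>m<M. F I idx m \<xi> * w $ m)" for \<xi> w I idx
  proof (cases "cond I idx")
    case True
    then have fin: "finite I" using finite_subset[of I "{..<N}"] unfolding cond_def by auto
    have len: "length (map (\<lambda>i. col (A \<xi>) i) (sorted_list_of_set I)) = r"
      using True unfolding cond_def by simp
    have idxM: "\<forall>j\<le>r. idx j < M" using True unfolding cond_def by blast
    have q: "Qop M N r A \<xi> w I idx = wedge (map (\<lambda>i. col (A \<xi>) i) (sorted_list_of_set I) @ [w]) idx"
      using True unfolding Qop_def cond_def by simp
    have f: "F I idx m \<xi> = (\<Sum>\<sigma>\<in>{\<sigma>. \<sigma> permutes {..<Suc r}}.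
      if idx (inv_into UNIV \<sigma> r) = m then of_int (sign \<sigma>) * (\<Prod>j\<in>{..<Suc r}-{inv_into UNIV \<sigma> r}.
        (map (\<lambda>i. col (A \<xi>) i) (sorted_list_of_set I)) ! (\<sigma> j) $ idx j) else 0)" for m
      using True unfolding F_def by simp
    show ?thesis unfolding q f by (rule wedge_expand[OF len idxM])
  next
    case False
    have f: "F I idx m \<xi> = 0" for m using False unfolding F_def by simp
    have q: "Qop M N r A \<xi> w I idx = 0" using False unfolding Qop_def cond_def by meson
    show ?thesis unfolding f q by simp
  qed
  have HPF: "HP d (r * k) (F I idx m)" for I idx m
  proof (cases "cond I idx")
    case False
    then show ?thesis unfolding F_def using HP_zero by simp
  next
    case True
    let ?L = "sorted_list_of_set I"
    have fin: "finite I" using finite_subset[of I "{..<N}"] True unfolding cond_def by auto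
    have lenL: "length ?L = r" using True unfolding cond_def by simp
    have LN: "?L ! l < N" if "l < r" for l
      using True lenL that fin unfolding cond_def
      by (metis lessThan_iff nth_mem set_sorted_list_of_set subsetD)
    have "HP d (r * k) (\<lambda>\<xi>. \<Sum>\<sigma>\<in>{\<sigma>. \<sigma> permutes {..<Suc r}}.
      if idx (inv_into UNIV \<sigma> r) = m then of_int (sign \<sigma>) * (\<Prod>j\<in>{..<Suc r}-{inv_into UNIV \<sigma> r}.
        (map (\<lambda>i. col (A \<xi>) i) ?L) ! (\<sigma> j) $ idx j) else 0)"
    proof (rule HP_sum)
      show "finite {\<sigma>. \<sigma> permutes {..<Suc r}}" by (rule finite_permutations) simp
    next
      fix \<sigma> assume "\<sigma> \<in> {\<sigma>. \<sigma> permutes {..<Suc r}}"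
      then have perm: "\<sigma> permutes {..<Suc r}" by simp
      define j0 where "j0 = inv_into UNIV \<sigma> r"
      have j0: "j0 \<in> {..<Suc r}" "\<sigma> j0 = r"
        unfolding j0_def using permutes_in_image[OF permutes_inv[OF perm], of r] permutes_inverses(1)[OF perm]
      by auto
      have cardS: "card ({..<Suc r}-{j0}) = r"
        using card_Diff_singleton[OF j0(1)] by (simp only: card_lessThan diff_Suc_1)
      have fac: "HP d k (\<lambda>\<xi>. (map (\<lambda>i. col (A \<xi>) i) ?L) ! (\<sigma> j) $ idx j)"
        if j: "j \<in> {..<Suc r}-{j0}" for j
      proof -
        have "\<sigma> j \<in> {..<Suc r}" using permutes_in_image[OF perm, of j] j by simp
        moreover have "\<sigma> j \<noteq> r" proof
        assume "\<sigma> j = r"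
        then have "\<sigma> j = \<sigma> j0" using j0 by simp
        from injD[OF permutes_inj[OF perm] this] show False using j by simp
      qed
        ultimately have sj: "\<sigma> j < r" by auto
        have ij: "idx j < M" using True j unfolding cond_def by auto
        have lN: "?L ! (\<sigma> j) < N" using LN sj by blast
        show ?thesis unfolding HP_def
        proof (intro exI conjI ballI)
          show "hom_poly d k (P (idx j) (?L ! (\<sigma> j)))" using P(1) by blast
        next
          fix \<xi> :: "'a vec" assume "\<xi> \<in> carrier_vec d"
          then have Ax: "A \<xi> = mat M N (\<lambda>(i,j). poly_eval d (P i j) \<xi>)" using P(2) by blast
          show "(map (\<lambda>i. col (A \<xi>) i) ?L) ! (\<sigma> j) $ idx j = poly_eval d (P (idx j) (?L ! (\<sigma> j))) \<xi>"
            using sj lenL ij lN by (simp add: Ax)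
        qed
      qed
      have "HP d (card ({..<Suc r}-{j0}) * k) (\<lambda>\<xi>. \<Prod>j\<in>{..<Suc r}-{j0}. (map (\<lambda>i. col (A \<xi>) i) ?L) ! (\<sigma> j) $ idx j)"
        by (rule HP_prod) (use fac in auto)
      then have "HP d (r * k) (\<lambda>\<xi>. of_int (sign \<sigma>) * (\<Prod>j\<in>{..<Suc r}-{j0}. (map (\<lambda>i. col (A \<xi>) i) ?L) ! (\<sigma> j) $ idx j))"
        unfolding cardS by (rule HP_scale)
      then show "HP d (r * k) (\<lambda>\<xi>. if idx (inv_into UNIV \<sigma> r) = m then of_int (sign \<sigma>) * (\<Prod>j\<in>{..<Suc r}-{inv_into UNIV \<sigma> r}.
        (map (\<lambda>i. col (A \<xi>) i) ?L) ! (\<sigma> j) $ idx j) else 0)"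
        unfolding j0_def[symmetric] by (cases "idx j0 = m") (auto intro: HP_zero)
    qed
    then show ?thesis unfolding F_def using True by simp
  qed
  define P' where "P' I idx m = (SOME c. hom_poly d (r * k) c \<and> (\<forall>\<xi>\<in>carrier_vec d. F I idx m \<xi> = poly_eval d c \<xi>))" for I idx m
  have P': "hom_poly d (r * k) (P' I idx m) \<and> (\<forall>\<xi>\<in>carrier_vec d. F I idx m \<xi> = poly_eval d (P' I idx m) \<xi>)" for I idx m
    unfolding P'_def using HPF[of I idx m] unfolding HP_def by (rule someI_ex)
  show ?thesis unfolding hom_symbol_X_def
    by (rule exI[of _ P']) (use P' eq in auto)
qed



lemma wedge_det:
  "wedge vs idx = det (mat (length vs) (length vs) (\<lambda>(j,l). vs ! l $ idx j))"
  unfolding wedge_def det_def by (simp add: atLeast0LessThan)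

lemma det_mat0: "det (mat 0 0 f) = 1"
proof -
  have "mat 0 0 f = 1\<^sub>m 0" by (rule eq_matI) auto
  then show ?thesis by simp
qed

lemma row_select:
  fixes U :: "'a::field mat"
  assumes "U \<in> carrier_mat n L"
    and "\<And>c. c \<in> carrier_vec L \<Longrightarrow> U *\<^sub>v c = 0\<^sub>v n \<Longrightarrow> c = 0\<^sub>v L"
  shows "\<exists>\<rho>. (\<forall>j<L. \<rho> j < n) \<and> det (mat L L (\<lambda>(j,m). U $$ (\<rho> j, m))) \<noteq> 0"
  using assms
proof (induction L arbitrary: U)
  case 0
  then show ?case using det_mat0 by auto
next
  case (Suc l)
  note U = Suc.prems(1)
  define U' where "U' = mat n l (\<lambda>(i,j). U $$ (i,j))"
  have U': "U' \<in> carrier_mat n l" unfolding U'_def by simp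
  have inj': "c = 0\<^sub>v l" if c: "c \<in> carrier_vec l" "U' *\<^sub>v c = 0\<^sub>v n" for c
  proof -
    define c' where "c' = vec (Suc l) (\<lambda>j. if j < l then c $ j else 0)"
    have c'c: "c' \<in> carrier_vec (Suc l)" unfolding c'_def by simp
    have "U *\<^sub>v c' = U' *\<^sub>v c"
    proof (rule eq_vecI)
      fix i assume "i < dim_vec (U' *\<^sub>v c)"
      then have i: "i < n" using U' by simp
      have "(U *\<^sub>v c') $ i = (\<Sum>j<Suc l. U $$ (i,j) * c' $ j)"
        using U i unfolding mult_mat_vec_def scalar_prod_def c'_def
        by (simp add: atLeast0LessThan)
      also have "\<dots> = (\<Sum>j<l. U $$ (i,j) * c $ j)"
        unfolding c'_def by simp
      also have "\<dots> = (U' *\<^sub>v c) $ i"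
        using U' i c(1) unfolding mult_mat_vec_def scalar_prod_def U'_def
        by (simp add: atLeast0LessThan)
      finally show "(U *\<^sub>v c') $ i = (U' *\<^sub>v c) $ i" .
    qed (use U U' in simp)
    then have "c' = 0\<^sub>v (Suc l)" using Suc.prems(2)[OF c'c] c(2) by simp
    then show ?thesis
    proof -
      assume h: "c' = 0\<^sub>v (Suc l)"
      show ?thesis
      proof (rule eq_vecI)
        fix j assume "j < dim_vec (0\<^sub>v l)"
        then have "j < l" by simp
        then have "c' $ j = c $ j" unfolding c'_def by simp
        then show "c $ j = 0\<^sub>v l $ j" using h \<open>j < l\<close> by simp
      qed (use c in simp)
    qed
  qed
  obtain \<rho>' where \<rho>': "\<forall>j<l. \<rho>' j < n" "det (mat l l (\<lambda>(j,m). U' $$ (\<rho>' j, m))) \<noteq> 0"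
    using Suc.IH[OF U' inj'] by blast
  define D where "D t = mat (Suc l) (Suc l) (\<lambda>(j,m). U $$ ((if j < l then \<rho>' j else t), m))" for t
  have Dc: "D t \<in> carrier_mat (Suc l) (Suc l)" for t unfolding D_def by simp
  define E where "E m = mat_delete (D 0) l m" for m
  have del: "mat_delete (D t) l m = E m" for t m
    unfolding E_def mat_delete_def D_def by (rule eq_matI) auto
  define lam where "lam = vec (Suc l) (\<lambda>m. (-1)^(l+m) * det (E m))"
  have expand: "det (D t) = (\<Sum>m<Suc l. U $$ (t, m) * lam $ m)" for t
  proof -
    have "det (D t) = (\<Sum>m<Suc l. D t $$ (l,m) * cofactor (D t) l m)"
      by (rule laplace_expansion_row[OF Dc]) simp
    also have "\<dots> = (\<Sum>m<Suc l. U $$ (t, m) * lam $ m)"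
      unfolding lam_def cofactor_def del by (intro sum.cong) (auto simp: D_def)
    finally show ?thesis .
  qed
  have "E l = mat l l (\<lambda>(j,m). U' $$ (\<rho>' j, m))"
    unfolding E_def mat_delete_def D_def U'_def by (rule eq_matI) (auto simp: \<rho>'(1))
  then have "lam $ l \<noteq> 0" unfolding lam_def using \<rho>'(2)
    by simp
  then have lam0: "lam \<noteq> 0\<^sub>v (Suc l)" by auto
  have lamc: "lam \<in> carrier_vec (Suc l)" unfolding lam_def by simp
  have "\<exists>t<n. det (D t) \<noteq> 0"
  proof (rule ccontr)
    assume "\<not> (\<exists>t<n. det (D t) \<noteq> 0)"
    then have z: "\<And>t. t < n \<Longrightarrow> det (D t) = 0" by auto
    have "U *\<^sub>v lam = 0\<^sub>v n"
    proof (rule eq_vecI)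
      fix t assume "t < dim_vec (0\<^sub>v n)"
      then have t: "t < n" by simp
      have "(U *\<^sub>v lam) $ t = (\<Sum>m<Suc l. U $$ (t, m) * lam $ m)"
        using U t lamc unfolding mult_mat_vec_def scalar_prod_def
        by (simp add: atLeast0LessThan)
      also have "\<dots> = 0" using z[OF t] expand[of t] by simp
      finally show "(U *\<^sub>v lam) $ t = 0\<^sub>v n $ t" using t by simp
    qed (use U in simp)
    then show False using Suc.prems(2)[OF lamc] lam0 by simp
  qed
  then obtain t where t: "t < n" "det (D t) \<noteq> 0" by blast
  define \<rho> where "\<rho> j = (if j < l then \<rho>' j else t)" for j
  have eqD: "mat (Suc l) (Suc l) (\<lambda>(j,m). U $$ (\<rho> j, m)) = D t"
    unfolding D_def \<rho>_def by simp
  have r1: "\<forall>j<Suc l. \<rho> j < n" unfolding \<rho>_def using t(1) \<rho>'(1) by auto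
  show ?case using r1 eqD t(2) by (intro exI[of _ \<rho>]) simp
qed

lemma Qop_zero_M:
  "Qop M N M A \<xi> w = (\<lambda>I idx. 0)"
proof (intro ext)
  fix I idx
  show "Qop M N M A \<xi> w I idx = 0"
  proof (cases "I \<subseteq> {..<N} \<and> card I = M \<and> (\<forall>j\<le>M. idx j < M) \<and> (\<forall>j>M. idx j = 0)")
    case False
    then show ?thesis unfolding Qop_def by meson
  next
    case True
    define vs where "vs = map (\<lambda>i. col (A \<xi>) i) (sorted_list_of_set I) @ [w]"
    have len: "length vs = Suc M" unfolding vs_def using True by simp
    have "\<not> inj_on idx {..<Suc M}"
    proof
      assume "inj_on idx {..<Suc M}"
      moreover have "idx ` {..<Suc M} \<subseteq> {..<M}" using True by auto
      ultimately have "card {..<Suc M} \<le> card {..<M}" by (intro card_inj_on_le) auto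
      then show False by simp
    qed
    then obtain i j where ij: "i < Suc M" "j < Suc M" "i \<noteq> j" "idx i = idx j"
      unfolding inj_on_def by auto
    define D where "D = mat (length vs) (length vs) (\<lambda>(j,l). vs ! l $ idx j)"
    have Dc: "D \<in> carrier_mat (Suc M) (Suc M)" unfolding D_def len by simp
    have "row D i = row D j"
      by (rule eq_vecI) (use ij len in \<open>auto simp: D_def\<close>)
    then have "det D = 0" by (rule det_identical_rows[OF Dc ij(3) ij(1) ij(2)])
    then show ?thesis unfolding Qop_def using True by (simp add: wedge_det D_def vs_def)
  qed
qed



context vec_space
begin

lemma cols_sub: "B \<in> carrier_mat n nc \<Longrightarrow> set (cols B) \<subseteq> carrier_vec n"
  using cols_dim[of B] by simp

lemma im_eq_span:
  assumes B: "B \<in> carrier_mat n nc"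
  shows "{B *\<^sub>v v | v. v \<in> carrier_vec nc} = span (set (cols B))"
proof -
  have sub: "set (cols B) \<subseteq> carrier_vec n" using cols_sub[OF B] .
  have dims: "\<forall>w\<in>set (cols B). dim_vec w = n" using sub by auto
  have mc: "mat_of_cols n (cols B) = B" using mat_of_cols_cols[of B] B by simp
  have lenc: "length (cols B) = nc" using B by simp
  have "span (set (cols B)) = span_list (cols B)" using span_list_as_span[OF sub] by simp
  also have "\<dots> = {B *\<^sub>v v | v. v \<in> carrier_vec nc}"
  proof
    show "span_list (cols B) \<subseteq> {B *\<^sub>v v | v. v \<in> carrier_vec nc}"
    proof
      fix x assume "x \<in> span_list (cols B)"
      then obtain c where xc: "x = lincomb_list c (cols B)" by (auto simp: span_list_def)
      have "lincomb_list c (cols B) = mat_of_cols n (cols B) *\<^sub>v vec (length (cols B)) c"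
        by (rule lincomb_list_as_mat_mult[OF dims])
      then have "x = B *\<^sub>v vec nc c" unfolding xc mc lenc .
      moreover have "vec nc c \<in> carrier_vec nc" by simp
      ultimately show "x \<in> {B *\<^sub>v v | v. v \<in> carrier_vec nc}" by blast
    qed
  next
    show "{B *\<^sub>v v | v. v \<in> carrier_vec nc} \<subseteq> span_list (cols B)"
    proof
      fix x assume "x \<in> {B *\<^sub>v v | v. v \<in> carrier_vec nc}"
      then obtain v where v: "v \<in> carrier_vec nc" "x = B *\<^sub>v v" by blast
      have vv: "vec nc (\<lambda>i. v $ i) = v" using v(1) by auto
      have "lincomb_list (\<lambda>i. v $ i) (cols B) = mat_of_cols n (cols B) *\<^sub>v vec (length (cols B)) (\<lambda>i. v $ i)"
        by (rule lincomb_list_as_mat_mult[OF dims])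
      then have "x = lincomb_list (\<lambda>i. v $ i) (cols B)" unfolding mc lenc vv v(2) by simp
      moreover have "(\<lambda>i. v $ i) \<in> {0..<length (cols B)} \<rightarrow> carrier class_ring" by simp
      ultimately show "x \<in> span_list (cols B)" by (intro in_span_listI) simp_all
    qed
  qed
  finally show ?thesis by simp
qed

lemma maxS:
  assumes B: "B \<in> carrier_mat n nc"
  shows "\<exists>S. S \<subseteq> set (cols B) \<and> lin_indpt S \<and> finite S \<and> card S = rank B \<and> set (cols B) \<subseteq> span S"
proof -
  obtain S where S: "maximal S (\<lambda>T. T \<subseteq> set (cols B) \<and> lin_indpt T)"
    using maximal_exists[of "(\<lambda>T. T \<subseteq> set (cols B) \<and> lin_indpt T)" "card (set (cols B))" "{}"]
    by (meson List.finite_set card_mono empty_iff empty_subsetI finite_lin_indpt2 rev_finite_subset)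
  have SC: "S \<subseteq> set (cols B)" "lin_indpt S" using S unfolding maximal_def by auto
  have fin: "finite S" using SC(1) finite_subset by blast
  have card: "rank B = card S" by (rule rank_card_indpt[OF B S])
  have sub: "set (cols B) \<subseteq> carrier_vec n" using cols_sub[OF B] .
  have "set (cols B) \<subseteq> span S"
  proof
    fix x assume x: "x \<in> set (cols B)"
    show "x \<in> span S"
    proof (cases "x \<in> S")
      case True
      then show ?thesis using in_own_span[of S] SC sub by auto
    next
      case False
      show ?thesis
      proof (rule ccontr)
        assume "x \<notin> span S"
        then have "\<not> lin_dep (S \<union> {x})"
          using lin_dep_iff_in_span[of S x] SC sub x False by auto
        then have "S \<union> {x} = S" using S unfolding maximal_def using SC x by blast
        then show False using False by blast
      qed
    qed
  qed
  then show ?thesis using SC fin card by auto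
qed

lemma span_cols_sub:
  assumes B: "B \<in> carrier_mat n nc" and S: "S \<subseteq> set (cols B)" "set (cols B) \<subseteq> span S"
  shows "span (set (cols B)) \<subseteq> span S"
proof -
  have Scar: "S \<subseteq> carrier_vec n" using S(1) cols_sub[OF B] by auto
  show ?thesis by (rule span_is_subset[OF S(2) span_is_submodule]) (use Scar in simp)
qed

lemma fwd_det0:
  assumes B: "B \<in> carrier_mat n nc" and us: "set us \<subseteq> span (set (cols B))"
    and len: "length us = Suc (rank B)"
    and idx: "\<forall>j<length us. idx j < n"
  shows "det (mat (length us) (length us) (\<lambda>(j,l). us ! l $ idx j)) = 0"
proof -
  let ?L = "length us"
  define D where "D = mat ?L ?L (\<lambda>(j,l). us ! l $ idx j)"
  have Dc: "D \<in> carrier_mat ?L ?L" unfolding D_def by simp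
  obtain S where S: "S \<subseteq> set (cols B)" "lin_indpt S" "finite S" "card S = rank B" "set (cols B) \<subseteq> span S"
    using maxS[OF B] by blast
  have Scar: "S \<subseteq> carrier_vec n" using S(1) cols_sub[OF B] by auto
  have usS: "set us \<subseteq> span S" using us span_cols_sub[OF B S(1) S(5)] by blast
  have uscar: "set us \<subseteq> carrier_vec n" using usS span_is_subset2[OF Scar] by auto
  show ?thesis
  proof (cases "distinct us")
    case False
    then obtain i j where ij: "i < ?L" "j < ?L" "i \<noteq> j" "us ! i = us ! j"
      unfolding distinct_conv_nth by blast
    have "col D i = col D j"
      by (rule eq_vecI) (use ij in \<open>auto simp: D_def\<close>)
    then show ?thesis unfolding D_def[symmetric] by (rule det_identical_cols[OF Dc ij(3) ij(1) ij(2)])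
  next
    case True
    have "lin_dep (set us)"
    proof (rule ccontr)
      assume "\<not> lin_dep (set us)"
      then have li: "lin_indpt (set us)" by simp
      have "card (set us) \<le> card S"
        using replacement[OF List.finite_set S(3) Scar li usS] by (elim exE conjE) linarith
      moreover have "card (set us) = Suc (card S)" using distinct_card[OF True] len S(4) by simp
      ultimately show False by simp
    qed
    define U where "U = mat_of_cols n us"
    have Uc: "U \<in> carrier_mat n ?L" unfolding U_def by simp
    have colsU: "cols U = us" unfolding U_def using cols_mat_of_cols[OF uscar] .
    obtain c where c: "c \<in> carrier_vec ?L" "c \<noteq> 0\<^sub>v ?L" "U *\<^sub>v c = 0\<^sub>v n"
      using lin_depE[OF Uc] \<open>lin_dep (set us)\<close> True colsU by metis
    have "D *\<^sub>v c = 0\<^sub>v ?L"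
    proof (rule eq_vecI)
      fix j assume "j < dim_vec (0\<^sub>v ?L)"
      then have j: "j < ?L" by simp
      have ij: "idx j < n" using idx j by simp
      have "(D *\<^sub>v c) $ j = (\<Sum>l<?L. us ! l $ idx j * c $ l)"
        using j c(1) unfolding D_def mult_mat_vec_def scalar_prod_def by (simp add: atLeast0LessThan)
      also have "\<dots> = (U *\<^sub>v c) $ idx j"
        using ij c(1) unfolding U_def mult_mat_vec_def scalar_prod_def
        by (simp add: atLeast0LessThan mat_of_cols_index)
      also have "\<dots> = 0" using c(3) ij by simp
      finally show "(D *\<^sub>v c) $ j = 0\<^sub>v ?L $ j" using j by simp
    qed (simp add: D_def)
    then have "det D = 0" using det_0_iff_vec_prod_zero_field[OF Dc] c by blast
    then show ?thesis unfolding D_def .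
  qed
qed


lemma bwd:
  assumes B: "B \<in> carrier_mat n N" and w: "w \<in> carrier_vec n" and wn: "w \<notin> span (set (cols B))"
  shows "\<exists>I idx. I \<subseteq> {..<N} \<and> card I = rank B \<and> (\<forall>j\<le>rank B. idx j < n) \<and> (\<forall>j>rank B. idx j = 0)
     \<and> wedge (map (\<lambda>i. col B i) (sorted_list_of_set I) @ [w]) idx \<noteq> 0"
proof -
  obtain S where S: "S \<subseteq> set (cols B)" "lin_indpt S" "finite S" "card S = rank B" "set (cols B) \<subseteq> span S"
    using maxS[OF B] by blast
  define r where "r = rank B"
  have sub: "set (cols B) \<subseteq> carrier_vec n" using cols_sub[OF B] .
  have Scar: "S \<subseteq> carrier_vec n" using S(1) sub by auto
  have ex: "\<exists>i. i < N \<and> col B i = s" if "s \<in> S" for s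
  proof -
    have "s \<in> set (cols B)" using that S(1) by auto
    then obtain i where "i < length (cols B)" "cols B ! i = s" by (auto simp: in_set_conv_nth)
    then show ?thesis using B by auto
  qed
  define g where "g s = (SOME i. i < N \<and> col B i = s)" for s
  have g: "g s < N \<and> col B (g s) = s" if "s \<in> S" for s
    unfolding g_def by (rule someI_ex) (rule ex[OF that])
  define I where "I = g ` S"
  have injg: "inj_on g S" by (rule inj_onI) (metis g)
  have cardI: "card I = r" unfolding I_def r_def using card_image[OF injg] S(4) by simp
  have IN: "I \<subseteq> {..<N}" unfolding I_def using g by auto
  have finI: "finite I" unfolding I_def using S(3) by simp
  have colI: "col B ` I = S" unfolding I_def image_image using g by (simp cong: image_cong)
  have injc: "inj_on (col B) I" unfolding I_def by (rule inj_onI) (use g in auto)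
  define Ls where "Ls = sorted_list_of_set I"
  have setLs: "set Ls = I" "distinct Ls" "length Ls = r" unfolding Ls_def using finI cardI by auto
  define us where "us = map (\<lambda>i. col B i) Ls @ [w]"
  have Sspan: "S \<subseteq> span (set (cols B))" using S(1) in_own_span[OF sub] by auto
  have wS: "w \<notin> S" using wn Sspan by auto
  have wspanS: "w \<notin> span S" using wn span_is_monotone[OF S(1)] by auto
  have setus: "set us = S \<union> {w}" unfolding us_def using setLs colI by auto
  have dist: "distinct us" unfolding us_def using setLs injc wS colI
    by (auto simp: distinct_map)
  have uscar: "set us \<subseteq> carrier_vec n" using setus Scar w by auto
  have lenus: "length us = Suc r" unfolding us_def using setLs by simp
  define U where "U = mat_of_cols n us"
  have Uc: "U \<in> carrier_mat n (Suc r)" unfolding U_def using lenus by (metis mat_of_cols_carrier(1))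
  have colsU: "cols U = us" unfolding U_def using cols_mat_of_cols[OF uscar] .
  have inj: "c = 0\<^sub>v (Suc r)" if c: "c \<in> carrier_vec (Suc r)" "U *\<^sub>v c = 0\<^sub>v n" for c
  proof (rule ccontr)
    assume "c \<noteq> 0\<^sub>v (Suc r)"
    then have "lin_dep (set (cols U))" using lin_depI[OF Uc c(1) _ c(2)] dist colsU by simp
    then have "lin_dep (S \<union> {w})" using colsU setus by simp
    then have "w \<in> span S" using lin_dep_iff_in_span[OF Scar S(2) w wS] by simp
    then show False using wspanS by simp
  qed
  obtain \<rho> where \<rho>: "\<forall>j<Suc r. \<rho> j < n" "det (mat (Suc r) (Suc r) (\<lambda>(j,m). U $$ (\<rho> j, m))) \<noteq> 0"
    using row_select[OF Uc inj] by blast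
  define idx where "idx j = (if j \<le> r then \<rho> j else 0)" for j
  have "mat (length us) (length us) (\<lambda>(j,l). us ! l $ idx j) = mat (Suc r) (Suc r) (\<lambda>(j,m). U $$ (\<rho> j, m))"
  proof (rule eq_matI)
    fix j l assume jl: "j < dim_row (mat (Suc r) (Suc r) (\<lambda>(j,m). U $$ (\<rho> j, m)))"
      "l < dim_col (mat (Suc r) (Suc r) (\<lambda>(j,m). U $$ (\<rho> j, m)))"
    then have j: "j < Suc r" and l: "l < Suc r" by auto
    have "U $$ (\<rho> j, l) = us ! l $ \<rho> j" unfolding U_def
      by (rule mat_of_cols_index) (use \<rho>(1) j l lenus in auto)
    then show "mat (length us) (length us) (\<lambda>(j,l). us ! l $ idx j) $$ (j, l) = mat (Suc r) (Suc r) (\<lambda>(j,m). U $$ (\<rho> j, m)) $$ (j, l)"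
      using j l lenus unfolding idx_def by simp
  qed (use lenus in auto)
  then have "wedge us idx \<noteq> 0" using \<rho>(2) wedge_det[of us idx] by simp
  moreover have "\<forall>j\<le>r. idx j < n" unfolding idx_def using \<rho>(1) by auto
  moreover have "\<forall>j>r. idx j = 0" unfolding idx_def by auto
  ultimately show ?thesis using IN cardI unfolding us_def Ls_def r_def by blast
qed

lemma main_LA:
  assumes B: "A \<xi> \<in> carrier_mat n N"
  shows "{A \<xi> *\<^sub>v v | v. v \<in> carrier_vec N} = {w \<in> carrier_vec n. Qop n N (rank (A \<xi>)) A \<xi> w = (\<lambda>I idx. 0)}"
proof -
  let ?B = "A \<xi>"
  let ?r = "rank ?B"
  have im: "{?B *\<^sub>v v | v. v \<in> carrier_vec N} = span (set (cols ?B))" by (rule im_eq_span[OF B])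
  have spc: "span (set (cols ?B)) \<subseteq> carrier_vec n" using span_is_subset2[OF cols_sub[OF B]] by simp
  have "span (set (cols ?B)) = {w \<in> carrier_vec n. Qop n N ?r A \<xi> w = (\<lambda>I idx. 0)}"
  proof (intro equalityI subsetI)
    fix w assume wsp: "w \<in> span (set (cols ?B))"
    have "Qop n N ?r A \<xi> w I idx = 0" for I idx
    proof (cases "I \<subseteq> {..<N} \<and> card I = ?r \<and> (\<forall>j\<le>?r. idx j < n) \<and> (\<forall>j>?r. idx j = 0)")
      case False
      then show ?thesis unfolding Qop_def by meson
    next
      case True
      define us where "us = map (\<lambda>i. col ?B i) (sorted_list_of_set I) @ [w]"
      have finI: "finite I" using True finite_subset[of I "{..<N}"] by auto
      have len: "length us = Suc ?r" unfolding us_def using True finI by simp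
      have "set (map (\<lambda>i. col ?B i) (sorted_list_of_set I)) \<subseteq> set (cols ?B)"
      proof
        fix x assume "x \<in> set (map (\<lambda>i. col ?B i) (sorted_list_of_set I))"
        then obtain i where "i \<in> I" "x = col ?B i" using finI by auto
        then have "i < N" using True by auto
        then show "x \<in> set (cols ?B)" using B \<open>x = col ?B i\<close>
          by (metis carrier_matD(2) cols_length cols_nth nth_mem)
      qed
      then have "set us \<subseteq> span (set (cols ?B))"
        using in_own_span[OF cols_sub[OF B]] wsp unfolding us_def by auto
      moreover have "\<forall>j<length us. idx j < n" using True len by auto
      ultimately have "det (mat (length us) (length us) (\<lambda>(j,l). us ! l $ idx j)) = 0"
        using fwd_det0[OF B _ len] by blast
      then show ?thesis unfolding Qop_def using True by (simp add: wedge_det us_def)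
    qed
    then show "w \<in> {w \<in> carrier_vec n. Qop n N ?r A \<xi> w = (\<lambda>I idx. 0)}" using wsp spc by auto
  next
    fix w assume "w \<in> {w \<in> carrier_vec n. Qop n N ?r A \<xi> w = (\<lambda>I idx. 0)}"
    then have w: "w \<in> carrier_vec n" and q: "Qop n N ?r A \<xi> w = (\<lambda>I idx. 0)" by auto
    show "w \<in> span (set (cols ?B))"
    proof (rule ccontr)
      assume "w \<notin> span (set (cols ?B))"
      then obtain I idx where h: "I \<subseteq> {..<N}" "card I = ?r" "\<forall>j\<le>?r. idx j < n" "\<forall>j>?r. idx j = 0"
        "wedge (map (\<lambda>i. col ?B i) (sorted_list_of_set I) @ [w]) idx \<noteq> 0"
        using bwd[OF B w] by blast
      have "Qop n N ?r A \<xi> w I idx = wedge (map (\<lambda>i. col ?B i) (sorted_list_of_set I) @ [w]) idx"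
        unfolding Qop_def using h(1-4) by simp
      then show False using q h(5) by simp
    qed
  qed
  then show ?thesis using im by simp
qed

end


theorem lemma2p1:
  fixes A :: "'a::field vec \<Rightarrow> 'a mat" and d k M N r :: nat
  assumes char: "(2::'a) \<noteq> 0"
    and d: "d \<ge> 1"
    and symb: "hom_symbol d k M N A"
    and rank: "\<forall>\<xi>\<in>carrier_vec d. \<xi> \<noteq> 0\<^sub>v d \<longrightarrow> vec_space.rank M (A \<xi>) = r"
  shows "(\<exists>k'. hom_symbol_X d k' M (Qop M N r A))
       \<and> (r < M \<longrightarrow> hom_symbol_X d (r * k) M (Qop M N r A))
       \<and> (r = M \<longrightarrow> (\<forall>\<xi>\<in>carrier_vec d. \<forall>w\<in>carrier_vec M. Qop M N r A \<xi> w = (\<lambda>I idx. 0)))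
       \<and> (\<forall>\<xi>\<in>carrier_vec d. \<xi> \<noteq> 0\<^sub>v d \<longrightarrow>
            {A \<xi> *\<^sub>v v | v. v \<in> carrier_vec N} = {w \<in> carrier_vec M. Qop M N r A \<xi> w = (\<lambda>I idx. 0)})"
proof -
  have H: "hom_symbol_X d (r * k) M (Qop M N r A)" by (rule Qop_hom[OF symb])
  obtain P where P: "\<forall>i j. hom_poly d k (P i j)"
     "\<forall>\<xi>\<in>carrier_vec d. A \<xi> = mat M N (\<lambda>(i,j). poly_eval d (P i j) \<xi>)"
    using symb unfolding hom_symbol_def by blast
  have Ac: "A \<xi> \<in> carrier_mat M N" if "\<xi> \<in> carrier_vec d" for \<xi> using P(2) that by simp
  have part4: "\<forall>\<xi>\<in>carrier_vec d. \<xi> \<noteq> 0\<^sub>v d \<longrightarrow>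
            {A \<xi> *\<^sub>v v | v. v \<in> carrier_vec N} = {w \<in> carrier_vec M. Qop M N r A \<xi> w = (\<lambda>I idx. 0)}"
  proof (intro ballI impI)
    fix \<xi> :: "'a vec" assume \<xi>: "\<xi> \<in> carrier_vec d" "\<xi> \<noteq> 0\<^sub>v d"
    have rk: "vec_space.rank M (A \<xi>) = r" using rank \<xi> by blast
    show "{A \<xi> *\<^sub>v v | v. v \<in> carrier_vec N} = {w \<in> carrier_vec M. Qop M N r A \<xi> w = (\<lambda>I idx. 0)}"
      using vec_space.main_LA[where A=A and \<xi>=\<xi> and n=M and N=N, OF Ac[OF \<xi>(1)]] unfolding rk .
  qed
  have part3: "r = M \<longrightarrow> (\<forall>\<xi>\<in>carrier_vec d. \<forall>w\<in>carrier_vec M. Qop M N r A \<xi> w = (\<lambda>I idx. 0))"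
    using Qop_zero_M[of M N A] by blast
  show ?thesis using H part3 part4 by blast
qed

end
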